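(* For every $n\ge0$, the sequence $(W_0,W_1,\dots,W_n)$ of Whitney numbers of the second kind of $\Pi(n)$ is weakly increasing. Moreover, for $n\ge3$ it is strictly increasing.
   Context: $[n]_0=\{0,\dots,n\}$. A priority forest on $[n]_0$ is a rooted forest with vertex set $[n]_0$ whose component trees $T_0,T_1,\dots$ are increasing (each non-root vertex has a larger label than its parent) and satisfy: for $j<k$ every label of $T_j$ is smaller than every label of $T_k$. The priority lattice $\Pi(n)$ consists of the priority forests on $[n]_0$, ordered by inclusion of edge sets, together with an extra top element $\hat1$ of rank $n+1$; the rank of a priority forest is its number of edges. $W_k$ is the number of elements of $\Pi(n)$ of rank $k$. *)

theory Defs
  imports Main
begin

text \<open>A forest on [n]_0 = {0..n} is given by its edge set E of pairs (parent, child).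
  Increasing rooted forest: every edge goes from a smaller to a larger label,
  and every vertex has at most one parent (the root of each tree is then its minimum).\<close>

definition increasing_forest :: "nat \<Rightarrow> (nat \<times> nat) set \<Rightarrow> bool" where
  "increasing_forest n E \<longleftrightarrow>
     E \<subseteq> {0..n} \<times> {0..n} \<and>
     (\<forall>(p, c) \<in> E. p < c) \<and>
     (\<forall>p q c. (p, c) \<in> E \<longrightarrow> (q, c) \<in> E \<longrightarrow> p = q)"

definition component :: "nat \<Rightarrow> (nat \<times> nat) set \<Rightarrow> nat \<Rightarrow> nat set" where
  "component n E x = {y \<in> {0..n}. (x, y) \<in> (E \<union> E\<inverse>)\<^sup>*}"

definition priority_forest :: "nat \<Rightarrow> (nat \<times> nat) set \<Rightarrow> bool" where
  "priority_forest n E \<longleftrightarrow> increasing_forest n E \<and>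
     (\<forall>x \<in> {0..n}. \<forall>y \<in> {0..n}. component n E x \<noteq> component n E y \<longrightarrow>
        (\<forall>a \<in> component n E x. \<forall>b \<in> component n E y. a < b) \<or>
        (\<forall>a \<in> component n E x. \<forall>b \<in> component n E y. b < a))"

text \<open>Whitney numbers of the second kind of the priority lattice \<Pi>(n):
  priority forests of rank k (= number of edges), plus the top element of rank n+1.\<close>
definition W :: "nat \<Rightarrow> nat \<Rightarrow> nat" where
  "W n k = card {E. priority_forest n E \<and> card E = k} + (if k = n + 1 then 1 else 0)"

end

theory Submission
  imports Defs
begin

definition nojump :: "(nat \<times> nat) set \<Rightarrow> bool" where
  "nojump E \<longleftrightarrow> (\<forall>(p,c)\<in>E. \<forall>v. p < v \<and> v < c \<longrightarrow> v \<in> snd ` E)"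

lemma root_reach:
  assumes inc: "increasing_forest n E" and v: "v \<notin> snd ` E"
    and r: "(v, y) \<in> (E \<union> E\<inverse>)\<^sup>*"
  shows "(v, y) \<in> E\<^sup>*"
  using r
proof (induction rule: rtrancl_induct)
  case base then show ?case by simp
next
  case (step y z)
  from step.hyps(2) show ?case
  proof
    assume "(y,z) \<in> E" then show ?thesis using step.IH by simp
  next
    assume yz: "(y,z) \<in> E\<inverse>"
    hence zy: "(z,y) \<in> E" by simp
    have "y \<noteq> v" using zy v by force
    with step.IH obtain w where vw: "(v,w) \<in> E\<^sup>*" and wy: "(w,y) \<in> E"
      by (metis rtranclE)
    have "w = z" using inc zy wy unfolding increasing_forest_def by blast
    then show ?thesis using vw by simp
  qed
qed

lemma reach_ge:
  assumes inc: "increasing_forest n E" and r: "(v, y) \<in> E\<^sup>*"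
  shows "v \<le> y"
  using r
proof (induction rule: rtrancl_induct)
  case base then show ?case by simp
next
  case (step y z)
  then show ?case using inc unfolding increasing_forest_def by fastforce
qed

lemma prio_nojump:
  assumes pf: "priority_forest n E"
  shows "nojump E"
  unfolding nojump_def
proof (clarify)
  fix p c v assume pc: "(p,c) \<in> E" and pv: "p < v" and vc: "v < c"
  have inc: "increasing_forest n E" using pf priority_forest_def by blast
  have cn: "c \<le> n" "p \<le> n" using inc pc unfolding increasing_forest_def by auto
  show "v \<in> snd ` E"
  proof (rule ccontr)
    assume nv: "v \<notin> snd ` E"
    have vcomp: "v \<in> component n E v" using cn vc unfolding component_def by auto
    have ccomp: "c \<in> component n E c" "p \<in> component n E c"
      using cn pc unfolding component_def by auto
    have "component n E v \<noteq> component n E c"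
    proof
      assume eq: "component n E v = component n E c"
      hence "(v,p) \<in> (E \<union> E\<inverse>)\<^sup>*" using ccomp unfolding component_def by auto
      hence "(v,p) \<in> E\<^sup>*" using root_reach[OF inc nv] by blast
      hence "v \<le> p" using reach_ge[OF inc] by blast
      with pv show False by simp
    qed
    moreover have "v \<in> {0..n}" "c \<in> {0..n}" using cn vc by auto
    ultimately show False using pf vcomp ccomp pv vc unfolding priority_forest_def
      by (metis less_asym)
  qed
qed

definition rt :: "(nat \<times> nat) set \<Rightarrow> nat \<Rightarrow> nat" where
  "rt E y = Max {r. r \<le> y \<and> r \<notin> snd ` E}"

lemma rt_set:
  assumes inc: "increasing_forest n E"
  shows "finite {r. r \<le> y \<and> r \<notin> snd ` E}" "0 \<in> {r. r \<le> y \<and> r \<notin> snd ` E}"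
proof -
  show "finite {r. r \<le> y \<and> r \<notin> snd ` E}" by (rule finite_subset[of _ "{..y}"]) auto
  have "0 \<notin> snd ` E" using inc unfolding increasing_forest_def by force
  then show "0 \<in> {r. r \<le> y \<and> r \<notin> snd ` E}" by simp
qed

lemma rt_mono:
  assumes inc: "increasing_forest n E" and yz: "y \<le> z"
  shows "rt E y \<le> rt E z"
  unfolding rt_def
  apply (rule Max_mono)
  using yz rt_set[OF inc] by auto

lemma rt_in: assumes inc: "increasing_forest n E" shows "rt E y \<in> {r. r \<le> y \<and> r \<notin> snd ` E}"
  unfolding rt_def using rt_set[OF inc, of y] by (intro Max_in) auto

lemma rt_le: assumes inc: "increasing_forest n E" shows "rt E y \<le> y"
  using rt_in[OF inc, of y] by simp

lemma rt_notin: assumes inc: "increasing_forest n E" shows "rt E y \<notin> snd ` E"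
  using rt_in[OF inc, of y] by simp

lemma rt_root: assumes inc: "increasing_forest n E" and "y \<notin> snd ` E" shows "rt E y = y"
proof -
  have "y \<le> rt E y" unfolding rt_def using rt_set[OF inc, of y] assms(2)
    by (intro Max_ge) auto
  then show ?thesis using rt_le[OF inc, of y] by simp
qed

lemma rt_edge:
  assumes inc: "increasing_forest n E" and nj: "nojump E" and pc: "(p,c) \<in> E"
  shows "rt E p = rt E c"
proof -
  have "p < c" using inc pc unfolding increasing_forest_def by blast
  have "c \<in> snd ` E" using pc by force
  have "{r. r \<le> c \<and> r \<notin> snd ` E} = {r. r \<le> p \<and> r \<notin> snd ` E}"
  proof -
    { fix r assume "r \<le> c" "r \<notin> snd ` E" "\<not> r \<le> p"
      hence "p < r" "r < c" using \<open>c \<in> snd ` E\<close> by (auto simp: order.order_iff_strict)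
      hence False using nj pc \<open>r \<notin> snd ` E\<close> unfolding nojump_def by blast }
    then show ?thesis using \<open>p < c\<close> by auto
  qed
  then show ?thesis unfolding rt_def by simp
qed

lemma rt_reach:
  assumes inc: "increasing_forest n E" and nj: "nojump E" and r: "(x, y) \<in> (E \<union> E\<inverse>)\<^sup>*"
  shows "rt E x = rt E y"
  using r
proof (induction rule: rtrancl_induct)
  case base then show ?case by simp
next
  case (step y z)
  then show ?case using rt_edge[OF inc nj, of y z] rt_edge[OF inc nj, of z y] by auto
qed

lemma reach_rt:
  assumes inc: "increasing_forest n E" and nj: "nojump E"
  shows "(rt E y, y) \<in> E\<^sup>*"
proof (induction y rule: less_induct)
  case (less y)
  show ?case
  proof (cases "y \<in> snd ` E")
    case False then show ?thesis using rt_root[OF inc] by simp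
  next
    case True
    then obtain p where py: "(p,y) \<in> E" by force
    hence "p < y" using inc unfolding increasing_forest_def by blast
    hence "(rt E p, p) \<in> E\<^sup>*" using less by blast
    moreover have "rt E p = rt E y" using rt_edge[OF inc nj py] .
    ultimately show ?thesis using py by (metis rtrancl.rtrancl_into_rtrancl)
  qed
qed

lemma nojump_prio:
  assumes inc: "increasing_forest n E" and nj: "nojump E"
  shows "priority_forest n E"
  unfolding priority_forest_def
proof (intro conjI inc ballI impI)
  fix x y assume x: "x \<in> {0..n}" and y: "y \<in> {0..n}"
    and ne: "component n E x \<noteq> component n E y"
  let ?R = "E \<union> E\<inverse>"
  have sym: "(a,b) \<in> ?R\<^sup>* \<Longrightarrow> (b,a) \<in> ?R\<^sup>*" for a b
  proof -
    assume "(a,b) \<in> ?R\<^sup>*"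
    hence "(b,a) \<in> (?R\<inverse>)\<^sup>*" by (simp add: rtrancl_converse)
    moreover have "?R\<inverse> = ?R" by auto
    ultimately show ?thesis by simp
  qed
  have und: "(rt E z, z) \<in> ?R\<^sup>*" for z
    using reach_rt[OF inc nj, of z] rtrancl_mono[of E ?R] by blast
  have "rt E x \<noteq> rt E y"
  proof
    assume eq: "rt E x = rt E y"
    have "(x,y) \<in> ?R\<^sup>*" using und[of x] und[of y] eq sym
      by (metis rtrancl_trans)
    hence "(x,z) \<in> ?R\<^sup>* \<longleftrightarrow> (y,z) \<in> ?R\<^sup>*" for z using sym by (metis rtrancl_trans)
    hence "component n E x = component n E y" unfolding component_def by auto
    with ne show False by simp
  qed
  have ca: "a \<in> component n E x \<Longrightarrow> rt E a = rt E x" for a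
    using rt_reach[OF inc nj] unfolding component_def by force
  have cb: "b \<in> component n E y \<Longrightarrow> rt E b = rt E y" for b
    using rt_reach[OF inc nj] unfolding component_def by force
  have lt: "rt E u < rt E w \<Longrightarrow> u < w" for u w
    using rt_mono[OF inc, of w u] by (metis not_le)
  show "(\<forall>a\<in>component n E x. \<forall>b\<in>component n E y. a < b) \<or>
        (\<forall>a\<in>component n E x. \<forall>b\<in>component n E y. b < a)"
  proof (cases "rt E x < rt E y")
    case True
    show ?thesis
    proof (rule disjI1, intro ballI)
      fix a b assume a: "a \<in> component n E x" and b: "b \<in> component n E y"
      show "a < b" using lt[of a b] ca[OF a] cb[OF b] True by simp
    qed
  next
    case False
    hence lt2: "rt E y < rt E x" using \<open>rt E x \<noteq> rt E y\<close> by simp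
    show ?thesis
    proof (rule disjI2, intro ballI)
      fix a b assume a: "a \<in> component n E x" and b: "b \<in> component n E y"
      show "b < a" using lt[of b a] ca[OF a] cb[OF b] lt2 by simp
    qed
  qed
qed

lemma prio_iff: "priority_forest n E \<longleftrightarrow> increasing_forest n E \<and> nojump E"
  using prio_nojump nojump_prio priority_forest_def by blast


definition A :: "nat \<Rightarrow> nat \<Rightarrow> (nat \<times> nat) set set" where
  "A n k = {E. priority_forest n E \<and> card E = k}"

lemma finA: "finite (A n k)"
proof (rule finite_subset[of _ "Pow ({0..n} \<times> {0..n})"])
  show "A n k \<subseteq> Pow ({0..n} \<times> {0..n})"
    unfolding A_def priority_forest_def increasing_forest_def by auto
qed simp

lemma finE: "increasing_forest n E \<Longrightarrow> finite E"
  unfolding increasing_forest_def by (meson finite_SigmaI finite_atLeastAtMost finite_subset)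

lemma snd_sub: "increasing_forest n E \<Longrightarrow> snd ` E \<subseteq> {1..n}"
  unfolding increasing_forest_def by force

definition fr :: "nat \<Rightarrow> (nat \<times> nat) set \<Rightarrow> nat" where
  "fr n E = Min {r \<in> {1..n}. r \<notin> snd ` E}"

definition fm :: "nat \<Rightarrow> (nat \<times> nat) set \<Rightarrow> (nat \<times> nat) set" where
  "fm n E = insert (0, fr n E) E"

lemma fr_props:
  assumes E: "E \<in> A n k" and k: "k < n"
  shows "fr n E \<in> {1..n}" "fr n E \<notin> snd ` E"
    "\<And>v. 0 < v \<Longrightarrow> v < fr n E \<Longrightarrow> v \<in> snd ` E"
proof -
  have inc: "increasing_forest n E" using E unfolding A_def priority_forest_def by blast
  have fin: "finite E" using finE[OF inc] .
  have "card (snd ` E) \<le> k" using card_image_le[OF fin, of snd] E unfolding A_def by simp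
  hence "\<not> {1..n} \<subseteq> snd ` E" using k card_mono[OF finite_imageI[OF fin]] by fastforce
  hence ne: "{r \<in> {1..n}. r \<notin> snd ` E} \<noteq> {}" by auto
  have "fr n E \<in> {r \<in> {1..n}. r \<notin> snd ` E}" unfolding fr_def using ne by (intro Min_in) auto
  then show "fr n E \<in> {1..n}" "fr n E \<notin> snd ` E" by auto
  fix v assume "0 < v" "v < fr n E"
  moreover have "v \<le> n" using \<open>fr n E \<in> {r \<in> {1..n}. r \<notin> snd ` E}\<close> \<open>v < fr n E\<close> by auto
  ultimately show "v \<in> snd ` E"
  proof -
    assume a: "0 < v" "v < fr n E" "v \<le> n"
    show ?thesis
    proof (rule ccontr)
      assume "v \<notin> snd ` E"
      hence "v \<in> {r \<in> {1..n}. r \<notin> snd ` E}" using a by auto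
      hence "fr n E \<le> v" unfolding fr_def by (intro Min_le) auto
      with a show False by simp
    qed
  qed
qed

lemma fm_in:
  assumes E: "E \<in> A n k" and k: "k < n"
  shows "fm n E \<in> A n (Suc k)"
proof -
  note fp = fr_props[OF E k]
  have pf: "priority_forest n E" "card E = k" using E unfolding A_def by auto
  have inc: "increasing_forest n E" and nj: "nojump E" using pf prio_iff by auto
  have notin: "(0, fr n E) \<notin> E" using fp(2) by force
  have inc2: "increasing_forest n (fm n E)"
    using inc fp(1,2) unfolding increasing_forest_def fm_def by force
  have nj2: "nojump (fm n E)"
    using nj fp(3) unfolding nojump_def fm_def by fastforce
  have "card (fm n E) = Suc k" using notin finE[OF inc] pf(2) unfolding fm_def by simp
  then show ?thesis using inc2 nj2 prio_iff unfolding A_def by auto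
qed

lemma fm_inj:
  assumes k: "k < n"
  shows "inj_on (fm n) (A n k)"
proof
  fix E1 E2 assume E1: "E1 \<in> A n k" and E2: "E2 \<in> A n k" and eq: "fm n E1 = fm n E2"
  note f1 = fr_props[OF E1 k] and f2 = fr_props[OF E2 k]
  have nj1: "nojump E1" and nj2: "nojump E2" using E1 E2 prio_iff unfolding A_def by auto
  have key: "fr n Ea \<le> fr n Eb"
    if Ea: "Ea \<in> A n k" and Eb: "Eb \<in> A n k" and eqab: "fm n Ea = fm n Eb" for Ea Eb
  proof (rule ccontr)
    assume "\<not> fr n Ea \<le> fr n Eb"
    hence lt: "fr n Eb < fr n Ea" by simp
    have "(0, fr n Ea) \<in> fm n Eb" using eqab unfolding fm_def by (metis insertI1)
    hence ed: "(0, fr n Ea) \<in> Eb" using lt unfolding fm_def by auto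
    have nb: "nojump Eb" using Eb prio_iff unfolding A_def by auto
    have p0: "0 < fr n Eb" using fr_props(1)[OF Eb k] by simp
    have "fr n Eb \<notin> snd ` Eb" using fr_props(2)[OF Eb k] .
    moreover have "fr n Eb \<in> snd ` Eb" using nb ed p0 lt unfolding nojump_def by blast
    ultimately show False by blast
  qed
  have r: "fr n E1 = fr n E2" using key[OF E1 E2 eq] key[OF E2 E1 eq[symmetric]] by simp
  have n1: "(0, fr n E1) \<notin> E1" using f1(2) by force
  have n2: "(0, fr n E2) \<notin> E2" using f2(2) by force
  have "E1 = fm n E1 - {(0, fr n E1)}" using n1 unfolding fm_def by auto
  also have "\<dots> = fm n E2 - {(0, fr n E2)}" using eq r by simp
  also have "\<dots> = E2" using n2 unfolding fm_def by auto
  finally show "E1 = E2" .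
qed

lemma not_img:
  assumes G: "\<And>E. E \<in> A n k \<Longrightarrow> fm n E \<noteq> G" and GA: "G \<in> A n (Suc k)" and k: "k < n"
  shows "card (A n k) < card (A n (Suc k))"
proof -
  have sub: "fm n ` A n k \<subseteq> A n (Suc k)" using fm_in[OF _ k] by auto
  have "fm n ` A n k \<noteq> A n (Suc k)"
  proof
    assume "fm n ` A n k = A n (Suc k)"
    then obtain E where "E \<in> A n k" "fm n E = G" using GA by (metis imageE)
    with G show False by blast
  qed
  hence "fm n ` A n k \<subset> A n (Suc k)" using sub by auto
  hence "card (fm n ` A n k) < card (A n (Suc k))" by (rule psubset_card_mono[OF finA])
  then show ?thesis using card_image[OF fm_inj[OF k]] by simp
qed

lemma weak:
  assumes k: "k < n"
  shows "card (A n k) \<le> card (A n (Suc k))"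
proof -
  have sub: "fm n ` A n k \<subseteq> A n (Suc k)" using fm_in[OF _ k] by auto
  show ?thesis using card_inj_on_le[OF fm_inj[OF k] sub finA] .
qed


lemma W_eq: "k \<le> n \<Longrightarrow> W n k = card (A n k)"
  unfolding W_def A_def by simp

lemma witness1:
  assumes k: "k + 2 \<le> n"
  shows "card (A n k) < card (A n (Suc k))"
proof -
  define G where "G = (\<lambda>j. (1::nat, j)) ` {2..k+2}"
  have inc: "increasing_forest n G" using k unfolding G_def increasing_forest_def by auto
  have nj: "nojump G" unfolding nojump_def G_def by force
  have "card G = card {2..k+2}" unfolding G_def by (rule card_image) (auto simp: inj_on_def)
  hence cG: "card G = Suc k" by simp
  have GA: "G \<in> A n (Suc k)" using inc nj cG prio_iff unfolding A_def by auto
  have "fm n E \<noteq> G" if "E \<in> A n k" for E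
  proof
    assume "fm n E = G"
    moreover have "(0, fr n E) \<in> fm n E" unfolding fm_def by simp
    ultimately show False unfolding G_def by auto
  qed
  then show ?thesis using not_img[OF _ GA] k by simp
qed

lemma witness2:
  assumes n: "n \<ge> 3" and k: "Suc k = n"
  shows "card (A n k) < card (A n (Suc k))"
proof -
  define G where "G = {(0::nat,1::nat),(0,2)} \<union> (\<lambda>j. (1::nat, j)) ` {3..n}"
  have inc: "increasing_forest n G" using n unfolding G_def increasing_forest_def by auto
  have nj: "nojump G" unfolding nojump_def G_def
  proof (clarify)
    fix p c v assume e: "(p, c) \<in> {(0::nat, 1::nat), (0, 2)} \<union> (Pair 1) ` {3..n}"
      and pv: "p < v" and vc: "v < c"
    show "v \<in> snd ` ({(0, 1), (0, 2)} \<union> Pair 1 ` {3..n})"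
    proof (cases "v = 2 \<or> v = 1")
      case True then show ?thesis by force
    next
      case False
      then have "3 \<le> v" "v \<le> n" using e pv vc by auto
      then show ?thesis by force
    qed
  qed
  have "card ((\<lambda>j. (1::nat, j)) ` {3..n}) = card {3..n}" by (rule card_image) (auto simp: inj_on_def)
  hence c1: "card ((\<lambda>j. (1::nat, j)) ` {3..n}) = n - 2" by simp
  have "card G = card {(0::nat,1::nat),(0,2)} + card ((\<lambda>j. (1::nat, j)) ` {3..n})"
    unfolding G_def by (rule card_Un_disjoint) auto
  hence cG: "card G = Suc k" using c1 n k by simp
  have GA: "G \<in> A n (Suc k)" using inc nj cG prio_iff unfolding A_def by auto
  have "fm n E \<noteq> G" if E: "E \<in> A n k" for E
  proof
    assume eq: "fm n E = G"
    have kn: "k < n" using k by simp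
    note fp = fr_props[OF E kn]
    have njE: "nojump E" using E prio_iff unfolding A_def by auto
    have "(0, fr n E) \<in> fm n E" unfolding fm_def by simp
    hence "(0, fr n E) \<in> G" using eq by simp
    hence r12: "fr n E = 1 \<or> fr n E = 2" unfolding G_def by auto
    have GE: "G = insert (0, fr n E) E" using eq unfolding fm_def by simp
    show False
    proof (cases "fr n E = 1")
      case True
      have "(0,2) \<in> G" unfolding G_def by simp
      hence "(0,2) \<in> E" using GE True by auto
      hence "1 \<in> snd ` E" using njE unfolding nojump_def by fastforce
      then show False using fp(2) True by simp
    next
      case False
      hence r2: "fr n E = 2" using r12 by simp
      have "(1,3) \<in> G" unfolding G_def using n by auto
      hence "(1,3) \<in> E" using GE r2 by auto
      hence "2 \<in> snd ` E" using njE unfolding nojump_def by fastforce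
      then show False using fp(2) r2 by simp
    qed
  qed
  then show ?thesis using not_img[OF _ GA] k by simp
qed

theorem lemma5p1:
  fixes n :: nat
  shows "(\<forall>k < n. W n k \<le> W n (Suc k)) \<and>
         (n \<ge> 3 \<longrightarrow> (\<forall>k < n. W n k < W n (Suc k)))"
proof (intro conjI allI impI)
  fix k assume k: "k < n"
  then show "W n k \<le> W n (Suc k)" using weak[OF k] W_eq[of k n] W_eq[of "Suc k" n] by simp
next
  fix k assume n: "n \<ge> 3" and k: "k < n"
  have "card (A n k) < card (A n (Suc k))"
  proof (cases "k + 2 \<le> n")
    case True then show ?thesis by (rule witness1)
  next
    case False
    hence "Suc k = n" using k by simp
    then show ?thesis using witness2[OF n] by simp
  qed
  then show "W n k < W n (Suc k)" using k W_eq[of k n] W_eq[of "Suc k" n] by simp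
qed

end
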